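(* There is an absolute constant $C>0$ such that the following holds. Let $(G,s,t)$ be an oriented serial superedge on $n$ vertices with principal subgraphs $(G_1,s_1,t_1),\dots,(G_k,s_k,t_k)$, each $G_i$ non-serial and having $n_i$ vertices. Then $$\sum_{i=1}^k n_i\,\big|\mathsf{ST}(G_i)/\mathrm{Aut}_{\mathrm{or}}(G_i,s_i,t_i)\big|\le C\,n\,\big|\mathsf{ST}(G)/\mathrm{Aut}_{\mathrm{or}}(G,s,t)\big|,$$ i.e. the left side is $O\big(n\,|\mathsf{ST}(G)/\mathrm{Aut}_{\mathrm{or}}(G,s,t)|\big)$.
   Context: All graphs are finite, simple and undirected. An oriented series-parallel graph is a triple $(G,s,t)$ where $G$ is a graph and $s\neq t$ are vertices, defined recursively: (i) $G$ is a single edge with vertex set $\{s,t\}$; or (ii) (serial superedge) there are $k\ge 2$ oriented series-parallel graphs $(G_1,s_1,t_1),\dots,(G_k,s_k,t_k)$ with $s_1=s$, $t_k=t$, $t_i=s_{i+1}$ for $1\le i<k$, $V(G_i)\cap V(G_{i+1})=\{s_{i+1}\}$, $V(G_i)\cap V(G_j)=\emptyset$ for $|i-j|\ge2$, and $G=G_1\cup\dots\cup G_k$; or (iii) (parallel superedge) there are $k\ge2$ oriented series-parallel graphs $(G_1,s,t),\dots,(G_k,s,t)$ with $V(G_i)\cap V(G_j)=\{s,t\}$ for $i\neq j$ and $G=G_1\cup\dots\cup G_k$. The $G_i$ are the principal subgraphs; a graph is non-serial if it is not a serial superedge. $\mathrm{Aut}_{\mathrm{or}}(H,u,v)$ is the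 group of automorphisms of $H$ fixing $u$ and $v$; $\mathsf{ST}(H)$ is the set of spanning trees of $H$, and $\mathsf{ST}(H)/\Gamma$ the set of orbits of spanning trees under the group $\Gamma$ (trees $A,B$ in the same orbit iff $A=\sigma(B)$ for some $\sigma\in\Gamma$). *)

theory Defs
  imports Complex_Main
begin

type_synonym sp_comp = "nat set \<times> nat set set \<times> nat \<times> nat"

definition simple_graph :: "nat set \<Rightarrow> nat set set \<Rightarrow> bool" where
  "simple_graph V E \<longleftrightarrow> finite V \<and> E \<subseteq> {{u, v} | u v. u \<in> V \<and> v \<in> V \<and> u \<noteq> v}"

definition cV :: "sp_comp \<Rightarrow> nat set" where "cV c = fst c"
definition cE :: "sp_comp \<Rightarrow> nat set set" where "cE c = fst (snd c)"
definition cs :: "sp_comp \<Rightarrow> nat" where "cs c = fst (snd (snd c))"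
definition ct :: "sp_comp \<Rightarrow> nat" where "ct c = snd (snd (snd c))"

definition serial_comb :: "nat set \<Rightarrow> nat set set \<Rightarrow> nat \<Rightarrow> nat \<Rightarrow> sp_comp list \<Rightarrow> bool" where
  "serial_comb V E s t comps \<longleftrightarrow>
     (let k = length comps in
       k \<ge> 2 \<and> cs (comps ! 0) = s \<and> ct (comps ! (k - 1)) = t \<and>
       (\<forall>i. i + 1 < k \<longrightarrow> ct (comps ! i) = cs (comps ! (i + 1))) \<and>
       (\<forall>i. i + 1 < k \<longrightarrow> cV (comps ! i) \<inter> cV (comps ! (i + 1)) = {cs (comps ! (i + 1))}) \<and>
       (\<forall>i j. i < k \<longrightarrow> j < k \<longrightarrow> i + 2 \<le> j \<longrightarrow> cV (comps ! i) \<inter> cV (comps ! j) = {}) \<and>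
       V = (\<Union>i<k. cV (comps ! i)) \<and> E = (\<Union>i<k. cE (comps ! i)))"

definition parallel_comb :: "nat set \<Rightarrow> nat set set \<Rightarrow> nat \<Rightarrow> nat \<Rightarrow> sp_comp list \<Rightarrow> bool" where
  "parallel_comb V E s t comps \<longleftrightarrow>
     (let k = length comps in
       k \<ge> 2 \<and> (\<forall>i<k. cs (comps ! i) = s \<and> ct (comps ! i) = t) \<and>
       (\<forall>i j. i < k \<longrightarrow> j < k \<longrightarrow> i \<noteq> j \<longrightarrow> cV (comps ! i) \<inter> cV (comps ! j) = {s, t}) \<and>
       V = (\<Union>i<k. cV (comps ! i)) \<and> E = (\<Union>i<k. cE (comps ! i)))"

inductive osp :: "nat set \<Rightarrow> nat set set \<Rightarrow> nat \<Rightarrow> nat \<Rightarrow> bool" where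
  edge: "s \<noteq> t \<Longrightarrow> osp {s, t} {{s, t}} s t"
| serial: "serial_comb V E s t comps \<Longrightarrow> list_all (\<lambda>c. osp (cV c) (cE c) (cs c) (ct c)) comps
            \<Longrightarrow> osp V E s t"
| parallel: "parallel_comb V E s t comps \<Longrightarrow> list_all (\<lambda>c. osp (cV c) (cE c) (cs c) (ct c)) comps
            \<Longrightarrow> osp V E s t"

definition serial_superedge_with :: "nat set \<Rightarrow> nat set set \<Rightarrow> nat \<Rightarrow> nat \<Rightarrow> sp_comp list \<Rightarrow> bool" where
  "serial_superedge_with V E s t comps \<longleftrightarrow>
     serial_comb V E s t comps \<and> list_all (\<lambda>c. osp (cV c) (cE c) (cs c) (ct c)) comps"

definition is_serial :: "nat set \<Rightarrow> nat set set \<Rightarrow> nat \<Rightarrow> nat \<Rightarrow> bool" where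
  "is_serial V E s t \<longleftrightarrow> (\<exists>comps. serial_superedge_with V E s t comps)"

definition non_serial :: "nat set \<Rightarrow> nat set set \<Rightarrow> nat \<Rightarrow> nat \<Rightarrow> bool" where
  "non_serial V E s t \<longleftrightarrow> \<not> is_serial V E s t"

definition connected_graph :: "nat set \<Rightarrow> nat set set \<Rightarrow> bool" where
  "connected_graph V E \<longleftrightarrow> (\<forall>u\<in>V. \<forall>v\<in>V. (\<lambda>x y. {x, y} \<in> E)\<^sup>*\<^sup>* u v)"

definition spanning_trees :: "nat set \<Rightarrow> nat set set \<Rightarrow> nat set set set" where
  "spanning_trees V E = {T. T \<subseteq> E \<and> connected_graph V T \<and> card T + 1 = card V}"

definition aut_or :: "nat set \<Rightarrow> nat set set \<Rightarrow> nat \<Rightarrow> nat \<Rightarrow> (nat \<Rightarrow> nat) set" where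
  "aut_or V E s t = {\<sigma>. bij_betw \<sigma> V V \<and>
      (\<forall>u\<in>V. \<forall>v\<in>V. {u, v} \<in> E \<longleftrightarrow> {\<sigma> u, \<sigma> v} \<in> E) \<and> \<sigma> s = s \<and> \<sigma> t = t}"

definition tree_image :: "(nat \<Rightarrow> nat) \<Rightarrow> nat set set \<Rightarrow> nat set set" where
  "tree_image \<sigma> T = (\<lambda>e. \<sigma> ` e) ` T"

definition st_orbits :: "nat set \<Rightarrow> nat set set \<Rightarrow> nat \<Rightarrow> nat \<Rightarrow> nat set set set set" where
  "st_orbits V E s t = (\<lambda>T. {tree_image \<sigma> T | \<sigma>. \<sigma> \<in> aut_or V E s t}) ` spanning_trees V E"

definition num_st_orbits :: "nat set \<Rightarrow> nat set set \<Rightarrow> nat \<Rightarrow> nat \<Rightarrow> nat" where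
  "num_st_orbits V E s t = card (st_orbits V E s t)"

end

theory Submission
  imports Defs
begin


definition basic :: "nat set \<Rightarrow> nat set set \<Rightarrow> nat \<Rightarrow> nat \<Rightarrow> bool" where
  "basic V E s t \<longleftrightarrow> finite V \<and> s \<in> V \<and> t \<in> V \<and> s \<noteq> t \<and>
     (\<forall>e\<in>E. \<exists>u v. e = {u,v} \<and> u \<noteq> v \<and> u \<in> V \<and> v \<in> V)"

definition avoid :: "nat set set \<Rightarrow> nat \<Rightarrow> nat set set" where
  "avoid E w = {e\<in>E. w \<notin> e}"

abbreviation rch :: "nat set set \<Rightarrow> nat \<Rightarrow> nat \<Rightarrow> bool" where
  "rch E \<equiv> (\<lambda>x y. {x,y} \<in> E)\<^sup>*\<^sup>*"

lemma rch_mono: "rch E x y \<Longrightarrow> E \<subseteq> F \<Longrightarrow> rch F x y"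
  by (induction rule: rtranclp_induct) (auto intro: rtranclp.rtrancl_into_rtrancl)

lemma rch_sym: "rch E x y \<Longrightarrow> rch E y x"
proof (induction rule: rtranclp_induct)
  case base then show ?case by simp
next
  case (step y z)
  then have "{z,y} \<in> E" by (simp add: insert_commute)
  with step show ?case by (meson converse_rtranclp_into_rtranclp)
qed

lemma rch_step: "rch E x y \<Longrightarrow> {y,z} \<in> E \<Longrightarrow> rch E x z"
  by (rule rtranclp.rtrancl_into_rtrancl)

lemma sing_inter: "A \<inter> B = {c} \<Longrightarrow> x \<in> A \<Longrightarrow> x \<in> B \<Longrightarrow> x = c" by blast

locale ser0 =
  fixes V :: "nat set" and E :: "nat set set" and s t :: nat and comps :: "sp_comp list"
  assumes comb: "serial_comb V E s t comps"
  and cbasic: "\<And>i. i < length comps \<Longrightarrow>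
        basic (cV (comps!i)) (cE (comps!i)) (cs (comps!i)) (ct (comps!i))"
begin

abbreviation "k \<equiv> length comps"
abbreviation "Vi i \<equiv> cV (comps!i)"
abbreviation "Ei i \<equiv> cE (comps!i)"
abbreviation "si i \<equiv> cs (comps!i)"
abbreviation "ti i \<equiv> ct (comps!i)"

lemma k2: "k \<ge> 2" using comb unfolding serial_comb_def Let_def by auto
lemma s0: "si 0 = s" using comb unfolding serial_comb_def Let_def by auto
lemma tk: "ti (k-1) = t" using comb unfolding serial_comb_def Let_def by auto
lemma junc: "i+1 < k \<Longrightarrow> ti i = si (i+1)" using comb unfolding serial_comb_def Let_def by auto
lemma adjV: "i+1 < k \<Longrightarrow> Vi i \<inter> Vi (i+1) = {si (i+1)}"
  using comb unfolding serial_comb_def Let_def by auto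
lemma disj: "i < k \<Longrightarrow> j < k \<Longrightarrow> i+2 \<le> j \<Longrightarrow> Vi i \<inter> Vi j = {}"
  using comb unfolding serial_comb_def Let_def by auto
lemma VV: "V = (\<Union>i<k. Vi i)" using comb unfolding serial_comb_def Let_def by auto
lemma EE: "E = (\<Union>i<k. Ei i)" using comb unfolding serial_comb_def Let_def by auto

lemma cfin: "i<k \<Longrightarrow> finite (Vi i)" using cbasic unfolding basic_def by auto
lemma csin: "i<k \<Longrightarrow> si i \<in> Vi i" using cbasic unfolding basic_def by auto
lemma ctin: "i<k \<Longrightarrow> ti i \<in> Vi i" using cbasic unfolding basic_def by auto
lemma cst: "i<k \<Longrightarrow> si i \<noteq> ti i" using cbasic unfolding basic_def by auto
lemma cedge: "i<k \<Longrightarrow> e \<in> Ei i \<Longrightarrow> \<exists>u v. e = {u,v} \<and> u \<noteq> v \<and> u \<in> Vi i \<and> v \<in> Vi i"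
  using cbasic unfolding basic_def by auto

lemma inter_le1:
  assumes "i<k" "j<k" "i\<noteq>j" "u \<in> Vi i" "u \<in> Vi j" "v \<in> Vi i" "v \<in> Vi j"
  shows "u = v"
proof -
  consider "i+2 \<le> j" | "j+2 \<le> i" | "j = i+1" | "i = j+1" using assms(3) by linarith
  then show ?thesis
  proof cases
    case 1 then show ?thesis using disj[of i j] assms by auto
  next
    case 2 then show ?thesis using disj[of j i] assms by auto
  next
    case 3
    then have "u \<in> Vi i \<inter> Vi (i+1)" "v \<in> Vi i \<inter> Vi (i+1)" using assms by auto
    then show ?thesis using sing_inter[OF adjV[of i]] assms 3 by (metis IntD1 IntD2)
  next
    case 4
    then have "u \<in> Vi j \<inter> Vi (j+1)" "v \<in> Vi j \<inter> Vi (j+1)" using assms by auto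
    then show ?thesis using sing_inter[OF adjV[of j]] assms 4 by (metis IntD1 IntD2)
  qed
qed

lemma ti_notin_before: "j<k \<Longrightarrow> m<j \<Longrightarrow> ti j \<notin> Vi m"
proof
  assume a: "j<k" "m<j" "ti j \<in> Vi m"
  show False
  proof (cases "m+2 \<le> j")
    case True then show ?thesis using disj[of m j] a ctin[of j] by auto
  next
    case False then have "j = m+1" using a by auto
    then have "ti j \<in> Vi m \<inter> Vi (m+1)" using a ctin[of j] by auto
    then show ?thesis using sing_inter[OF adjV[of m]] a cst[of j] \<open>j = m+1\<close> by (metis IntD1 IntD2)
  qed
qed

lemma si_notin_after: "m<k \<Longrightarrow> i<m \<Longrightarrow> si i \<notin> Vi m"
proof
  assume a: "m<k" "i<m" "si i \<in> Vi m"
  show False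
  proof (cases "i+2 \<le> m")
    case True then show ?thesis using disj[of i m] a csin[of i] by auto
  next
    case False then have "m = i+1" using a by auto
    then show ?thesis using adjV[of i] a csin[of i] cst[of i] junc[of i] by auto
  qed
qed

lemma k0: "0 < k" using k2 by linarith
lemma s_in: "s \<in> Vi 0" using csin[OF k0] s0 by simp
lemma t_in: "t \<in> Vi (k-1)" using ctin[of "k-1"] tk k2 by auto
lemma t_notin: "j < k-1 \<Longrightarrow> t \<notin> Vi j" using ti_notin_before[of "k-1" j] tk k2 by auto
lemma s_notin: "0 < j \<Longrightarrow> j < k \<Longrightarrow> s \<notin> Vi j" using si_notin_after[of j 0] s0 by auto

lemma s_ne_t: "s \<noteq> t"
proof
  assume "s = t"
  then have "t \<in> Vi 0" using s_in by simp
  moreover have "k-1 > 0" using k2 by auto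
  ultimately show False using t_notin[of 0] k2 s_notin[of "k-1"] t_in by auto
qed

lemma basicV: "basic V E s t"
  unfolding basic_def
proof (intro conjI)
  show "finite V" using VV cfin by auto
  show "s \<in> V" using VV s_in k2 by auto
  show "t \<in> V" using VV t_in k2 by auto
  show "s \<noteq> t" by (rule s_ne_t)
  show "\<forall>e\<in>E. \<exists>u v. e = {u, v} \<and> u \<noteq> v \<and> u \<in> V \<and> v \<in> V"
  proof
    fix e assume "e \<in> E"
    then obtain i where "i<k" "e \<in> Ei i" using EE by auto
    then show "\<exists>u v. e = {u, v} \<and> u \<noteq> v \<and> u \<in> V \<and> v \<in> V" using cedge[of i e] VV by blast
  qed
qed

lemma edge_comp:
  assumes "e \<in> E" shows "\<exists>m<k. e \<in> Ei m \<and> (\<exists>u v. e = {u,v} \<and> u \<noteq> v \<and> u \<in> Vi m \<and> v \<in> Vi m)"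
proof -
  obtain m where "m<k" "e \<in> Ei m" using EE assms by auto
  then show ?thesis using cedge by blast
qed

lemma edge_in_comp:
  assumes "i<k" "u \<in> Vi i" "v \<in> Vi i" "u \<noteq> v" "{u,v} \<in> E"
  shows "{u,v} \<in> Ei i"
proof -
  obtain m a b where m: "m<k" "{u,v} \<in> Ei m" "{u,v} = {a,b}" "a \<in> Vi m" "b \<in> Vi m"
    using edge_comp[OF assms(5)] by blast
  then have "u \<in> Vi m" "v \<in> Vi m" by (auto simp: doubleton_eq_iff)
  show ?thesis
  proof (cases "m = i")
    case True then show ?thesis using m by simp
  next
    case False
    then have "u = v" using inter_le1[of i m u v] assms \<open>u \<in> Vi m\<close> \<open>v \<in> Vi m\<close> m by auto
    then show ?thesis using assms by simp
  qed
qed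

lemma E_disj: "a<k \<Longrightarrow> b<k \<Longrightarrow> a \<noteq> b \<Longrightarrow> Ei a \<inter> Ei b = {}"
proof (rule ccontr)
  assume a: "a<k" "b<k" "a\<noteq>b" "Ei a \<inter> Ei b \<noteq> {}"
  then obtain e where e: "e \<in> Ei a" "e \<in> Ei b" by auto
  obtain u v where uv: "e = {u,v}" "u\<noteq>v" "u \<in> Vi a" "v \<in> Vi a" using cedge[OF a(1) e(1)] by blast
  obtain u' v' where uv': "e = {u',v'}" "u' \<in> Vi b" "v' \<in> Vi b" using cedge[OF a(2) e(2)] by blast
  have "u \<in> Vi b" "v \<in> Vi b" using uv uv' by (auto simp: doubleton_eq_iff)
  then show False using inter_le1[of a b u v] a uv by auto
qed

lemma chain:
  assumes "a \<le> b" "b < k" "\<And>m. a \<le> m \<Longrightarrow> m \<le> b \<Longrightarrow> rch X (si m) (ti m)"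
  shows "rch X (si a) (ti b)"
  using assms
proof (induction b)
  case 0 then show ?case by auto
next
  case (Suc b)
  show ?case
  proof (cases "a = Suc b")
    case True then show ?thesis using Suc.prems by auto
  next
    case False
    then have "rch X (si a) (ti b)" using Suc by auto
    moreover have "ti b = si (Suc b)" using junc[of b] Suc.prems by auto
    moreover have "rch X (si (Suc b)) (ti (Suc b))" using Suc.prems by auto
    ultimately show ?thesis by auto
  qed
qed

end



context ser0 begin
lemma Ei_sub: "i<k \<Longrightarrow> Ei i \<subseteq> E" using EE by auto
lemma Ei_avoid: "i<k \<Longrightarrow> w \<notin> Vi i \<Longrightarrow> Ei i \<subseteq> avoid E w"
  using Ei_sub cedge unfolding avoid_def by fastforce
end

lemma par_facts: assumes "parallel_comb V E s t comps"
  shows "length comps \<ge> 2" "\<And>i. i<length comps \<Longrightarrow> cs (comps!i) = s" "\<And>i. i<length comps \<Longrightarrow> ct (comps!i) = t"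
   "\<And>i j. i < length comps \<Longrightarrow> j < length comps \<Longrightarrow> i \<noteq> j \<Longrightarrow> cV (comps ! i) \<inter> cV (comps ! j) = {s, t}"
   "V = (\<Union>i<length comps. cV (comps!i))" "E = (\<Union>i<length comps. cE (comps!i))"
  using assms unfolding parallel_comb_def Let_def by simp_all

lemma osp_basic: "osp V E s t \<Longrightarrow> basic V E s t"
proof (induction rule: osp.induct)
  case (edge s t) thus ?case by (auto simp: basic_def)
next
  case (serial V E s t comps)
  interpret ser0 V E s t comps using serial by (unfold_locales) (auto simp: list_all_length)
  show ?case by (rule basicV)
next
  case (parallel V E s t comps)
  let ?k = "length comps"
  note pf = par_facts[OF parallel.hyps(1)]
  have k2: "?k\<ge>2" and st: "\<forall>i<?k. cs (comps!i) = s \<and> ct (comps!i) = t"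
    and VV: "V = (\<Union>i<?k. cV (comps!i))" and EE: "E = (\<Union>i<?k. cE (comps!i))"
    using pf by auto
  have b: "\<And>i. i<?k \<Longrightarrow> basic (cV (comps!i)) (cE (comps!i)) (cs (comps!i)) (ct (comps!i))"
    using parallel.IH by (auto simp: list_all_length)
  have k0: "0 < ?k" using k2 by linarith
  have b0: "cs (comps!0) \<in> cV (comps!0)" "ct (comps!0) \<in> cV (comps!0)" "cs (comps!0) \<noteq> ct (comps!0)"
    using b[OF k0] unfolding basic_def by auto
  have sv: "s \<in> cV (comps!0)" "t \<in> cV (comps!0)" "s \<noteq> t" using b0 st k0 by auto
  show ?case unfolding basic_def
  proof (intro conjI)
    have "finite (cV (comps!i))" if "i<?k" for i using b[OF that] unfolding basic_def by blast
    then show "finite V" unfolding VV by blast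
    show "s \<in> V" using sv k0 unfolding VV by blast
    show "t \<in> V" using sv k0 unfolding VV by blast
    show "s \<noteq> t" using sv by blast
    show "\<forall>e\<in>E. \<exists>u v. e = {u, v} \<and> u \<noteq> v \<and> u \<in> V \<and> v \<in> V"
    proof
      fix e assume "e \<in> E"
      then obtain i where i: "i<?k" "e \<in> cE (comps!i)" using EE by auto
      then obtain u v where "e = {u, v}" "u \<noteq> v" "u \<in> cV (comps!i)" "v \<in> cV (comps!i)"
        using b[OF i(1)] unfolding basic_def by blast
      then show "\<exists>u v. e = {u, v} \<and> u \<noteq> v \<and> u \<in> V \<and> v \<in> V"
        using i(1) unfolding VV by blast
    qed
  qed
qed

lemma ser0I: "serial_comb V E s t comps \<Longrightarrow> list_all (\<lambda>c. osp (cV c) (cE c) (cs c) (ct c)) comps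
   \<Longrightarrow> ser0 V E s t comps"
  by unfold_locales (auto simp: list_all_length intro: osp_basic)

lemma osp_conn: "osp V E s t \<Longrightarrow> (\<forall>x\<in>V. x\<noteq>t \<longrightarrow> rch (avoid E t) s x) \<and> rch E s t"
proof (induction rule: osp.induct)
  case (edge s t)
  have "{s,t} \<in> avoid {{s,t}} t \<longleftrightarrow> False" unfolding avoid_def by auto
  moreover have "rch {{s,t}} s t" by (rule r_into_rtranclp) simp
  ultimately show ?case by auto
next
  case (serial V E s t comps)
  interpret ser0 V E s t comps using serial by (unfold_locales) (auto simp: list_all_length intro: osp_basic)
  have IH: "\<And>i. i<k \<Longrightarrow> (\<forall>x\<in>Vi i. x\<noteq>ti i \<longrightarrow> rch (avoid (Ei i) (ti i)) (si i) x) \<and> rch (Ei i) (si i) (ti i)"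
    using serial.IH by (auto simp: list_all_length)
  have full: "rch (Ei i) (si i) x" if "i<k" "x \<in> Vi i" for i x
  proof (cases "x = ti i")
    case True then show ?thesis using IH[OF that(1)] by simp
  next
    case False then show ?thesis using IH[OF that(1)] that rch_mono[of "avoid (Ei i) (ti i)"]
      unfolding avoid_def by blast
  qed
  have tosi: "rch (avoid E t) s (si i)" if "i<k" for i
  proof (cases "i = 0")
    case True then show ?thesis using s0 by simp
  next
    case False
    have "rch (avoid E t) (si 0) (ti (i-1))"
    proof (rule chain)
      fix m assume "0 \<le> m" "m \<le> i-1"
      then have "m < k-1" "m<k" using that False by auto
      then show "rch (avoid E t) (si m) (ti m)"
        using rch_mono[OF full[of m "ti m"]] ctin Ei_avoid[of m t] t_notin by auto
    qed (use that in auto)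
    moreover have "ti (i-1) = si i" using junc[of "i-1"] that False by auto
    ultimately show ?thesis using s0 by simp
  qed
  show ?case
  proof (intro conjI ballI impI)
    fix x assume x: "x \<in> V" "x \<noteq> t"
    then obtain i where i: "i<k" "x \<in> Vi i" using VV by auto
    have "rch (avoid E t) (si i) x"
    proof (cases "i < k-1")
      case True then show ?thesis using rch_mono[OF full[OF i]] Ei_avoid[of i t] t_notin i by auto
    next
      case False then have "i = k-1" using i by auto
      then have "rch (avoid (Ei i) t) (si i) x" using IH[OF i(1)] i x tk by auto
      moreover have "avoid (Ei i) t \<subseteq> avoid E t" using Ei_sub[OF i(1)] unfolding avoid_def by auto
      ultimately show ?thesis using rch_mono by blast
    qed
    then show "rch (avoid E t) s x" using tosi[OF i(1)] by auto
  next
    have "rch E (si 0) (ti (k-1))"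
    proof (rule chain)
      fix m assume "0 \<le> m" "m \<le> k-1"
      then have "m<k" using k2 by auto
      then show "rch E (si m) (ti m)" using full[of m "ti m"] ctin[of m] Ei_sub[of m] rch_mono by blast
    qed (use k2 in auto)
    then show "rch E s t" using s0 tk by simp
  qed
next
  case (parallel V E s t comps)
  let ?k = "length comps"
  note pf = par_facts[OF parallel.hyps(1)]
  have k2: "?k\<ge>2" and st: "\<forall>i<?k. cs (comps!i) = s \<and> ct (comps!i) = t"
    and VV: "V = (\<Union>i<?k. cV (comps!i))" and EE: "E = (\<Union>i<?k. cE (comps!i))"
    using pf by auto
  have IH: "\<And>i. i<?k \<Longrightarrow> (\<forall>x\<in>cV (comps!i). x\<noteq>t \<longrightarrow> rch (avoid (cE (comps!i)) t) s x) \<and> rch (cE (comps!i)) s t"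
    using parallel.IH st by (auto simp: list_all_length)
  have k0: "0 < ?k" using k2 by linarith
  show ?case
  proof (intro conjI ballI impI)
    fix x assume x: "x \<in> V" "x \<noteq> t"
    then obtain i where i: "i<?k" "x \<in> cV (comps!i)" using VV by auto
    have "avoid (cE (comps!i)) t \<subseteq> avoid E t" using EE i unfolding avoid_def by auto
    then show "rch (avoid E t) s x" using IH[OF i(1)] i x rch_mono by blast
  next
    show "rch E s t" using IH[OF k0] EE k0 rch_mono[of "cE (comps!0)" s t E] by auto
  qed
qed

lemma osp_reach: "osp V E s t \<Longrightarrow> x \<in> V \<Longrightarrow> rch E s x"
proof -
  assume a: "osp V E s t" "x \<in> V"
  show ?thesis
  proof (cases "x = t")
    case True then show ?thesis using osp_conn[OF a(1)] by simp
  next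
    case False then show ?thesis using osp_conn[OF a(1)] a rch_mono[of "avoid E t" s x E]
      unfolding avoid_def by auto
  qed
qed

lemma cross: "rch E a b \<Longrightarrow> a \<in> W \<Longrightarrow> b \<notin> W \<Longrightarrow> \<exists>u x. u \<in> W \<and> x \<notin> W \<and> {u,x} \<in> E"
  by (induction rule: rtranclp_induct) auto

lemma st_exists:
  assumes fin: "finite V" and sV: "s \<in> V" and ed: "\<forall>e\<in>E. \<exists>u v. e={u,v} \<and> u\<in>V \<and> v\<in>V"
    and r: "\<forall>x\<in>V. rch E s x"
  shows "spanning_trees V E \<noteq> {}"
proof -
  have claim: "n < card V \<longrightarrow> (\<exists>W T. W \<subseteq> V \<and> s \<in> W \<and> card W = n+1 \<and> T \<subseteq> E \<and> finite T
        \<and> card T = n \<and> (\<forall>e\<in>T. e \<subseteq> W) \<and> (\<forall>x\<in>W. rch T s x))" for n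
  proof (induction n)
    case 0 show ?case using sV by (intro impI exI[of _ "{s}"] exI[of _ "{}"]) auto
  next
    case (Suc n)
    show ?case
    proof
      assume n: "Suc n < card V"
      then obtain W T where WT: "W \<subseteq> V" "s \<in> W" "card W = n+1" "T \<subseteq> E" "finite T"
        "card T = n" "\<forall>e\<in>T. e \<subseteq> W" "\<forall>x\<in>W. rch T s x" using Suc by auto
      have "W \<noteq> V" using WT(3) n by auto
      then obtain y where y: "y \<in> V" "y \<notin> W" using WT(1) by auto
      obtain u x where ux: "u \<in> W" "x \<notin> W" "{u,x} \<in> E" using cross[OF r[rule_format, OF y(1)] WT(2) y(2)] by auto
      obtain a b where ab: "{u,x} = {a,b}" "a\<in>V" "b\<in>V" using ed ux(3) by blast
      have xV: "x \<in> V" using ab by (auto simp: doubleton_eq_iff)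
      have finW: "finite W" using WT(1) fin finite_subset by auto
      have nT: "{u,x} \<notin> T" using WT(7) ux(2) by auto
      show "\<exists>W T. W \<subseteq> V \<and> s \<in> W \<and> card W = Suc n+1 \<and> T \<subseteq> E \<and> finite T
        \<and> card T = Suc n \<and> (\<forall>e\<in>T. e \<subseteq> W) \<and> (\<forall>x\<in>W. rch T s x)"
      proof (intro exI conjI)
        show "insert x W \<subseteq> V" using WT xV by auto
        show "s \<in> insert x W" using WT by auto
        show "card (insert x W) = Suc n + 1" using WT(3) finW ux(2) by simp
        show "insert {u,x} T \<subseteq> E" using WT ux by auto
        show "finite (insert {u,x} T)" using WT by auto
        show "card (insert {u,x} T) = Suc n" using WT nT by simp
        show "\<forall>e\<in>insert {u,x} T. e \<subseteq> insert x W" using WT ux by auto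
        have "rch (insert {u,x} T) s z" if "z \<in> W" for z
        proof -
          have "rch T s z" using WT(8) that by auto
          then show ?thesis using rch_mono[of T s z "insert {u,x} T"] by blast
        qed
        moreover have "rch (insert {u,x} T) s x"
        proof -
          have "rch T s u" using WT(8) ux(1) by auto
          then have "rch (insert {u,x} T) s u" by (rule rch_mono) auto
          then show ?thesis by (rule rch_step) simp
        qed
        ultimately show "\<forall>z\<in>insert x W. rch (insert {u,x} T) s z" by auto
      qed
    qed
  qed
  have cV: "card V > 0" using fin sV card_gt_0_iff by auto
  then have "card V - 1 < card V" by simp
  then obtain W T where WT: "W \<subseteq> V" "s \<in> W" "card W = card V - 1 + 1" "T \<subseteq> E" "finite T"
        "card T = card V - 1" "\<forall>x\<in>W. rch T s x" using claim[of "card V - 1"] by blast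
  have W1: "card W = card V" "card T + 1 = card V" using WT(3,6) cV by auto
  have "W = V" using card_subset_eq[OF fin WT(1) W1(1)] .
  have "connected_graph V T" unfolding connected_graph_def
  proof (intro ballI)
    fix u v assume "u \<in> V" "v \<in> V"
    then have "rch T s u" "rch T s v" using WT(7) \<open>W = V\<close> by auto
    then show "rch T u v" using rch_sym[of T s u] rtranclp_trans[of _ u s v] by blast
  qed
  then have "T \<in> spanning_trees V E" unfolding spanning_trees_def using WT(4) W1(2) by auto
  then show ?thesis by auto
qed

lemma osp_st: "osp V E s t \<Longrightarrow> spanning_trees V E \<noteq> {}"
  using osp_basic[of V E s t] osp_reach[of V E s t] unfolding basic_def
  by (intro st_exists) blast+

lemma ns_avoid:
  assumes o: "osp V E s t" and ns: "non_serial V E s t" and w: "w\<in>V" "w\<noteq>s" "w\<noteq>t"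
  shows "rch (avoid E w) s t"
  using o
proof (cases rule: osp.cases)
  case edge then show ?thesis using w by auto
next
  case (serial comps)
  then have "is_serial V E s t" unfolding is_serial_def serial_superedge_with_def by auto
  then show ?thesis using ns unfolding non_serial_def by auto
next
  case (parallel comps)
  let ?k = "length comps"
  note pf = par_facts[OF parallel(1)]
  have k2: "?k\<ge>2" and st: "\<forall>i<?k. cs (comps!i) = s \<and> ct (comps!i) = t"
    and int: "\<forall>i j. i < ?k \<longrightarrow> j < ?k \<longrightarrow> i \<noteq> j \<longrightarrow> cV (comps ! i) \<inter> cV (comps ! j) = {s, t}"
    and VV: "V = (\<Union>i<?k. cV (comps!i))" and EE: "E = (\<Union>i<?k. cE (comps!i))"
    using pf by auto
  have os: "\<And>i. i<?k \<Longrightarrow> osp (cV (comps!i)) (cE (comps!i)) s t"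
    using parallel st by (auto simp: list_all_length)
  obtain m where m: "m<?k" "w \<in> cV (comps!m)" using VV w by auto
  define m' where "m' = (if m = 0 then 1 else (0::nat))"
  have m': "m' < ?k" "m' \<noteq> m" using k2 m unfolding m'_def by auto
  have wn: "w \<notin> cV (comps!m')"
  proof
    assume "w \<in> cV (comps!m')"
    then have "w \<in> {s,t}" using int m m' by blast
    then show False using w by auto
  qed
  have "rch (cE (comps!m')) s t" using osp_conn[OF os[OF m'(1)]] by auto
  moreover have "cE (comps!m') \<subseteq> avoid E w"
    using osp_basic[OF os[OF m'(1)]] wn EE m'(1) unfolding basic_def avoid_def by fastforce
  ultimately show ?thesis using rch_mono by blast
qed



lemma rch_in: "rch F a x \<Longrightarrow> F \<subseteq> E \<Longrightarrow> a \<in> V \<Longrightarrow> basic V E s t \<Longrightarrow> x \<in> V"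
proof (induction rule: rtranclp_induct)
  case base then show ?case by simp
next
  case (step y z)
  then have "{y,z} \<in> E" by auto
  then obtain u v where "{y,z} = {u,v}" "u \<in> V" "v \<in> V" using step.prems unfolding basic_def by blast
  then show ?case by (auto simp: doubleton_eq_iff)
qed

lemma rch_last: "rch (avoid E w) a x \<Longrightarrow> x \<noteq> a \<Longrightarrow> x \<noteq> w"
  by (erule rtranclp.cases) (auto simp: avoid_def)

lemma id_aut: "id \<in> aut_or V E s t" unfolding aut_or_def by auto

lemma tree_image_id: "tree_image id T = T" unfolding tree_image_def by auto

lemma tree_image_comp: "tree_image (\<rho> \<circ> \<sigma>) T = tree_image \<rho> (tree_image \<sigma> T)"
  unfolding tree_image_def by (auto simp: image_comp)

lemma aut_compose: "\<sigma> \<in> aut_or V E s t \<Longrightarrow> \<rho> \<in> aut_or V E s t \<Longrightarrow> \<rho> \<circ> \<sigma> \<in> aut_or V E s t"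
  unfolding aut_or_def
proof (clarify, intro conjI)
  assume a: "bij_betw \<sigma> V V" "\<forall>u\<in>V. \<forall>v\<in>V. ({u, v} \<in> E) = ({\<sigma> u, \<sigma> v} \<in> E)"
     "\<sigma> s = s" "\<sigma> t = t" "bij_betw \<rho> V V" "\<forall>u\<in>V. \<forall>v\<in>V. ({u, v} \<in> E) = ({\<rho> u, \<rho> v} \<in> E)"
     "\<rho> s = s" "\<rho> t = t"
  show "bij_betw (\<rho> \<circ> \<sigma>) V V" using a bij_betw_trans by blast
  have "\<sigma> u \<in> V" if "u \<in> V" for u using a(1) that bij_betwE by blast
  then show "\<forall>u\<in>V. \<forall>v\<in>V. ({u, v} \<in> E) = ({(\<rho> \<circ> \<sigma>) u, (\<rho> \<circ> \<sigma>) v} \<in> E)" using a by auto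
  show "(\<rho> \<circ> \<sigma>) s = s" "(\<rho> \<circ> \<sigma>) t = t" using a by auto
qed

lemma aut_inv: assumes "\<sigma> \<in> aut_or V E s t" "s \<in> V" "t \<in> V"
  shows "inv_into V \<sigma> \<in> aut_or V E s t"
proof -
  have b: "bij_betw \<sigma> V V" and e: "\<forall>u\<in>V. \<forall>v\<in>V. ({u, v} \<in> E) = ({\<sigma> u, \<sigma> v} \<in> E)"
    and st: "\<sigma> s = s" "\<sigma> t = t" using assms unfolding aut_or_def by auto
  let ?t = "inv_into V \<sigma>"
  have bi: "bij_betw ?t V V" using b bij_betw_inv_into by blast
  have tV: "?t u \<in> V" if "u \<in> V" for u using bi that bij_betwE by blast
  have ff: "\<sigma> (?t u) = u" if "u \<in> V" for u using b that by (simp add: bij_betw_inv_into_right)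
  have "({u, v} \<in> E) = ({?t u, ?t v} \<in> E)" if "u \<in> V" "v \<in> V" for u v
    using e[rule_format, OF tV[OF that(1)] tV[OF that(2)]] ff that by simp
  moreover have "?t s = s" "?t t = t" using st b assms(2,3) by (metis bij_betw_imp_inj_on inv_into_f_f)+
  ultimately show ?thesis using bi unfolding aut_or_def by auto
qed

locale ser = ser0 +
  assumes osps: "\<And>i. i<k \<Longrightarrow> osp (Vi i) (Ei i) (si i) (ti i)"
  and nss: "\<And>i. i<k \<Longrightarrow> non_serial (Vi i) (Ei i) (si i) (ti i)"
begin

definition L :: "nat \<Rightarrow> nat set" where "L j = (\<Union>i\<in>{..j}. Vi i)"
definition A :: "nat \<Rightarrow> nat set" where "A w = {x. rch (avoid E w) s x}"

lemma bV: "basic V E s t" by (rule basicV)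
lemma inV: "i<k \<Longrightarrow> x \<in> Vi i \<Longrightarrow> x \<in> V" using VV by auto
lemma ctV: "i<k \<Longrightarrow> ti i \<in> V" using inV ctin by blast
lemma csV: "i<k \<Longrightarrow> si i \<in> V" using inV csin by blast
lemma edgeV: "{y,z} \<in> E \<Longrightarrow> y \<in> V \<and> z \<in> V"
proof -
  assume e: "{y,z} \<in> E"
  have "\<forall>e\<in>E. \<exists>u v. e = {u,v} \<and> u \<noteq> v \<and> u \<in> V \<and> v \<in> V" using bV unfolding basic_def by simp
  from this[rule_format, OF e] obtain u v where "{y,z} = {u,v}" "u \<in> V" "v \<in> V" by blast
  then show ?thesis by (auto simp: doubleton_eq_iff)
qed
lemma finV: "finite V" using bV unfolding basic_def by auto
lemma sV: "s \<in> V" using bV unfolding basic_def by auto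
lemma tV: "t \<in> V" using bV unfolding basic_def by auto

lemma A_sub: "A w \<subseteq> V"
  unfolding A_def using rch_in[OF _ _ sV bV] unfolding avoid_def by blast

lemma finA: "finite (A w)" using A_sub finV finite_subset by blast

lemma L_fin: "j<k \<Longrightarrow> finite (L j)" unfolding L_def using cfin by auto
lemma L_last: "L (k-1) = V" unfolding L_def VV using k2
  by (metis Suc_diff_1 k0 lessThan_Suc_atMost)
lemma in_L: "i \<le> j \<Longrightarrow> x \<in> Vi i \<Longrightarrow> x \<in> L j" unfolding L_def by auto
lemma s_L: "s \<in> L j" using in_L[of 0 j s] s_in by auto

lemma vj_ne_s: "j+1<k \<Longrightarrow> ti j \<noteq> s"
  using junc[of j] csin[of "j+1"] s_notin[of "j+1"] by auto
lemma vj_ne_t: "j+1<k \<Longrightarrow> ti j \<noteq> t"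
  using ctin[of j] t_notin[of j] by auto
lemma t_notL: "j+1<k \<Longrightarrow> t \<notin> L j"
  unfolding L_def using t_notin by auto

lemma sep:
  assumes "rch (avoid E (ti j)) a x" "a \<in> L j" "j+1<k"
  shows "x \<in> L j"
  using assms
proof (induction rule: rtranclp_induct)
  case base then show ?case by simp
next
  case (step y z)
  then have yL: "y \<in> L j" and ed: "{y,z} \<in> E" and ny: "ti j \<noteq> y" "ti j \<noteq> z"
    by (auto simp: avoid_def)
  obtain m u v where m: "m<k" "{y,z} \<in> Ei m" "{y,z} = {u,v}" "u \<in> Vi m" "v \<in> Vi m"
    using edge_comp[OF ed] by blast
  have ym: "y \<in> Vi m" "z \<in> Vi m" using m by (auto simp: doubleton_eq_iff)
  obtain a where a: "a \<le> j" "y \<in> Vi a" using yL unfolding L_def by auto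
  show ?case
  proof (cases "m \<le> j")
    case True then show ?thesis using in_L ym by auto
  next
    case False
    show ?thesis
    proof (cases "a+2 \<le> m")
      case True then show ?thesis using disj[of a m] a ym m step by auto
    next
      case False
      then have "a = j" "m = j+1" using \<open>\<not> m \<le> j\<close> a by auto
      then have "y = si (j+1)" using sing_inter[OF adjV[of j]] a ym step by auto
      then show ?thesis using junc[of j] step ny by auto
    qed
  qed
qed

lemma to_si: assumes "i<k" "\<And>m. m<i \<Longrightarrow> w \<notin> Vi m" shows "rch (avoid E w) s (si i)"
proof (cases "i = 0")
  case True then show ?thesis using s0 by simp
next
  case False
  have "rch (avoid E w) (si 0) (ti (i-1))"
  proof (rule chain)
    fix m assume "0 \<le> m" "m \<le> i-1"
    then have m: "m<i" "m<k" using assms False by auto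
    have "rch (Ei m) (si m) (ti m)" using osp_reach[OF osps[OF m(2)] ctin[OF m(2)]] .
    then show "rch (avoid E w) (si m) (ti m)" using Ei_avoid[OF m(2) assms(2)[OF m(1)]] rch_mono by blast
  qed (use assms in auto)
  moreover have "ti (i-1) = si i" using junc[of "i-1"] assms False by auto
  ultimately show ?thesis using s0 by simp
qed

lemma from_ti: assumes "i<k" "\<And>m. i<m \<Longrightarrow> m<k \<Longrightarrow> w \<notin> Vi m" shows "rch (avoid E w) (ti i) t"
proof (cases "i = k-1")
  case True then show ?thesis using tk by simp
next
  case False
  have "rch (avoid E w) (si (i+1)) (ti (k-1))"
  proof (rule chain)
    fix m assume "i+1 \<le> m" "m \<le> k-1"
    then have m: "i<m" "m<k" using assms False k2 by auto
    have "rch (Ei m) (si m) (ti m)" using osp_reach[OF osps[OF m(2)] ctin[OF m(2)]] .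
    then show "rch (avoid E w) (si m) (ti m)" using Ei_avoid[OF m(2) assms(2)[OF m]] rch_mono by blast
  qed (use assms False k2 in auto)
  moreover have "ti i = si (i+1)" using junc[of i] assms False by auto
  ultimately show ?thesis using tk by simp
qed

lemma A_eq: assumes j: "j+1<k" shows "A (ti j) = L j - {ti j}"
proof
  show "A (ti j) \<subseteq> L j - {ti j}"
  proof
    fix x assume "x \<in> A (ti j)"
    then have r: "rch (avoid E (ti j)) s x" unfolding A_def by auto
    have "x \<in> L j" using sep[OF r s_L j] .
    moreover have "x \<noteq> ti j"
      using rch_last[OF r] vj_ne_s[OF j] by auto
    ultimately show "x \<in> L j - {ti j}" by auto
  qed
next
  show "L j - {ti j} \<subseteq> A (ti j)"
  proof
    fix x assume "x \<in> L j - {ti j}"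
    then obtain i where i: "i \<le> j" "x \<in> Vi i" "x \<noteq> ti j" unfolding L_def by auto
    have ik: "i<k" using i j by auto
    have r1: "rch (avoid E (ti j)) s (si i)"
      by (rule to_si[OF ik]) (use ti_notin_before[of j] j i in auto)
    have r2: "rch (avoid E (ti j)) (si i) x"
    proof (cases "i<j")
      case True
      then show ?thesis using osp_reach[OF osps[OF ik] i(2)] Ei_avoid[OF ik ti_notin_before[of j i]] j
          rch_mono by auto
    next
      case False then have "i = j" using i by auto
      then have "rch (avoid (Ei i) (ti i)) (si i) x" using osp_conn[OF osps[OF ik]] i by auto
      moreover have "avoid (Ei i) (ti i) \<subseteq> avoid E (ti j)" using Ei_sub[OF ik] \<open>i = j\<close>
        unfolding avoid_def by auto
      ultimately show ?thesis using rch_mono by blast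
    qed
    show "x \<in> A (ti j)" using r1 r2 unfolding A_def by auto
  qed
qed

lemma cutv:
  assumes w: "w \<in> V" "w \<noteq> s" "w \<noteq> t" and nt: "t \<notin> A w"
  shows "\<exists>j. j+1<k \<and> w = ti j"
proof (rule ccontr)
  assume nj: "\<not> (\<exists>j. j+1<k \<and> w = ti j)"
  obtain i where i: "i<k" "w \<in> Vi i" using w VV by auto
  have before: "w \<notin> Vi m" if "m<i" for m
  proof
    assume wm: "w \<in> Vi m"
    show False
    proof (cases "m+2 \<le> i")
      case True then show ?thesis using disj[of m i] wm i by auto
    next
      case False then have "i = m+1" using that by auto
      then have "w = si (m+1)" using sing_inter[OF adjV[of m]] wm i by auto
      then show ?thesis using junc[of m] nj \<open>i = m+1\<close> i by auto
    qed
  qed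
  have after: "w \<notin> Vi m" if "i<m" "m<k" for m
  proof
    assume wm: "w \<in> Vi m"
    show False
    proof (cases "i+2 \<le> m")
      case True then show ?thesis using disj[of i m] wm i that by auto
    next
      case False then have "m = i+1" using that by auto
      then have "w = si (i+1)" using sing_inter[OF adjV[of i]] wm i that by auto
      then show ?thesis using junc[of i] nj \<open>m = i+1\<close> that by auto
    qed
  qed
  have wsi: "w \<noteq> si i"
  proof (cases "i = 0")
    case True then show ?thesis using s0 w by auto
  next
    case False then show ?thesis using junc[of "i-1"] nj i by (metis Suc_diff_1 Suc_eq_plus1 not_gr_zero)
  qed
  have wti: "w \<noteq> ti i"
  proof (cases "i = k-1")
    case True then show ?thesis using tk w by auto
  next
    case False then show ?thesis using nj i by (metis Suc_eq_plus1 Suc_lessI diff_Suc_1 less_diff_conv)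
  qed
  have "rch (avoid (Ei i) w) (si i) (ti i)" using ns_avoid[OF osps[OF i(1)] nss[OF i(1)] i(2) wsi wti] .
  moreover have "avoid (Ei i) w \<subseteq> avoid E w" using Ei_sub[OF i(1)] unfolding avoid_def by auto
  ultimately have "rch (avoid E w) (si i) (ti i)" using rch_mono by blast
  then have "rch (avoid E w) s t" using to_si[OF i(1) before] from_ti[OF i(1) after]
    by (meson rtranclp_trans)
  then show False using nt unfolding A_def by auto
qed

abbreviation "Aut \<equiv> aut_or V E s t"

lemma aut_bij: "\<sigma> \<in> Aut \<Longrightarrow> bij_betw \<sigma> V V" unfolding aut_or_def mem_Collect_eq by blast
lemma aut_V: "\<sigma> \<in> Aut \<Longrightarrow> x \<in> V \<Longrightarrow> \<sigma> x \<in> V"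
  using aut_bij bij_betwE by metis
lemma aut_inj: "\<sigma> \<in> Aut \<Longrightarrow> inj_on \<sigma> V"
  using aut_bij bij_betw_imp_inj_on by metis
lemma aut_edge: "\<sigma> \<in> Aut \<Longrightarrow> u \<in> V \<Longrightarrow> v \<in> V \<Longrightarrow> {u,v} \<in> E \<longleftrightarrow> {\<sigma> u, \<sigma> v} \<in> E"
  unfolding aut_or_def mem_Collect_eq by blast
lemma aut_s: "\<sigma> \<in> Aut \<Longrightarrow> \<sigma> s = s" unfolding aut_or_def mem_Collect_eq by blast
lemma aut_t: "\<sigma> \<in> Aut \<Longrightarrow> \<sigma> t = t" unfolding aut_or_def mem_Collect_eq by blast
lemma inv_aut: "\<sigma> \<in> Aut \<Longrightarrow> inv_into V \<sigma> \<in> Aut" by (rule aut_inv[OF _ sV tV])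
lemma inv_f: "\<sigma> \<in> Aut \<Longrightarrow> x \<in> V \<Longrightarrow> inv_into V \<sigma> (\<sigma> x) = x"
  by (rule inv_into_f_f[OF aut_inj])

lemma A_pres: assumes a: "\<sigma> \<in> Aut" "w \<in> V" "x \<in> A w" shows "\<sigma> x \<in> A (\<sigma> w)"
proof -
  have "rch (avoid E w) s x" using a unfolding A_def by auto
  then have "rch (avoid E (\<sigma> w)) s (\<sigma> x)"
  proof (induction rule: rtranclp_induct)
    case base then show ?case using aut_s[OF a(1)] by simp
  next
    case (step y z)
    have e: "{y,z} \<in> E" "w \<noteq> y" "w \<noteq> z" using step(2) by (auto simp: avoid_def)
    have yz: "y \<in> V" "z \<in> V" using edgeV[OF e(1)] by auto
    have "{\<sigma> y, \<sigma> z} \<in> E" using aut_edge[OF a(1) yz] e by simp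
    moreover have "\<sigma> w \<noteq> \<sigma> y" using inj_on_eq_iff[OF aut_inj[OF a(1)] a(2) yz(1)] e(2) by simp
    moreover have "\<sigma> w \<noteq> \<sigma> z" using inj_on_eq_iff[OF aut_inj[OF a(1)] a(2) yz(2)] e(3) by simp
    ultimately have "{\<sigma> y, \<sigma> z} \<in> avoid E (\<sigma> w)" unfolding avoid_def by auto
    then show ?case using step.IH by (rule rch_step[rotated])
  qed
  then show ?thesis unfolding A_def by auto
qed

lemma L_mono_step: "j+1<k \<Longrightarrow> card (L j) < card (L (j+1))"
proof -
  assume j: "j+1<k"
  have "L j \<subseteq> L (j+1)"
  proof
    fix x assume "x \<in> L j"
    then obtain i where "i \<le> j" "x \<in> Vi i" unfolding L_def by auto
    then show "x \<in> L (j+1)" using in_L[of i "j+1" x] by auto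
  qed
  moreover have "ti (j+1) \<in> L (j+1)" using in_L[of "j+1" "j+1"] ctin[OF j] by auto
  moreover have "ti (j+1) \<notin> L j" unfolding L_def using ti_notin_before[OF j] by auto
  ultimately have "L j \<subset> L (j+1)" by blast
  then show ?thesis using psubset_card_mono[OF L_fin[OF j]] by blast
qed

lemma L_mono: "j < m \<Longrightarrow> m < k \<Longrightarrow> card (L j) < card (L m)"
proof (induction m)
  case 0 then show ?case by simp
next
  case (Suc m)
  then show ?case using L_mono_step[of m] by (cases "j = m") auto
qed

lemma fix_junc: assumes a: "\<sigma> \<in> Aut" "j+1<k" shows "\<sigma> (ti j) = ti j"
proof -
  let ?w = "ti j" and ?t = "inv_into V \<sigma>"
  have wV: "?w \<in> V" using ctV[of j] a(2) by auto
  let ?u = "\<sigma> ?w"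
  have uV: "?u \<in> V" using aut_V[OF a(1) wV] .
  have tau: "?t \<in> Aut" using inv_aut[OF a(1)] .
  have tu: "?t ?u = ?w" using inv_f[OF a(1) wV] .
  have "\<sigma> ?w = \<sigma> s \<longleftrightarrow> ?w = s" by (rule inj_on_eq_iff[OF aut_inj[OF a(1)] wV sV])
  then have us: "?u \<noteq> s" using aut_s[OF a(1)] vj_ne_s[OF a(2)] by simp
  have "\<sigma> ?w = \<sigma> t \<longleftrightarrow> ?w = t" by (rule inj_on_eq_iff[OF aut_inj[OF a(1)] wV tV])
  then have ut: "?u \<noteq> t" using aut_t[OF a(1)] vj_ne_t[OF a(2)] by simp
  have tn: "t \<notin> A ?u"
  proof
    assume "t \<in> A ?u"
    then have "?t t \<in> A (?t ?u)" by (rule A_pres[OF tau uV])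
    then have "t \<in> A ?w" using tu aut_t[OF tau] by simp
    then show False using A_eq[OF a(2)] t_notL[OF a(2)] by auto
  qed
  obtain m where m: "m+1<k" "?u = ti m" using cutv[OF uV us ut tn] by auto
  have c1: "card (A ?w) \<le> card (A ?u)"
  proof (rule card_inj_on_le)
    show "inj_on \<sigma> (A ?w)" by (rule inj_on_subset[OF aut_inj[OF a(1)] A_sub])
    show "\<sigma> ` A ?w \<subseteq> A ?u" using A_pres[OF a(1) wV] by (intro image_subsetI)
    show "finite (A ?u)" by (rule finA)
  qed
  have c2: "card (A ?u) \<le> card (A ?w)"
  proof (rule card_inj_on_le)
    show "inj_on ?t (A ?u)" by (rule inj_on_subset[OF aut_inj[OF tau] A_sub])
    show "?t ` A ?u \<subseteq> A ?w" using A_pres[OF tau uV] unfolding tu by (intro image_subsetI)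
    show "finite (A ?w)" by (rule finA)
  qed
  have "card (L j - {ti j}) = card (L m - {ti m})" using c1 c2 A_eq[OF a(2)] A_eq[OF m(1)] m(2) by simp
  moreover have "ti j \<in> L j" using in_L[of j j] ctin[of j] a(2) by auto
  moreover have "ti m \<in> L m" using in_L[of m m] ctin[of m] m(1) by auto
  ultimately have "card (L j) - 1 = card (L m) - 1" by simp
  moreover have "card (L j) > 0" using L_fin[of j] a(2) \<open>ti j \<in> L j\<close> card_gt_0_iff by auto
  moreover have "card (L m) > 0" using L_fin[of m] m(1) \<open>ti m \<in> L m\<close> card_gt_0_iff by auto
  ultimately have cj: "card (L j) = card (L m)" by linarith
  have "j = m"
  proof (rule ccontr)
    assume "j \<noteq> m"
    then consider "j < m" | "m < j" by linarith
    then show False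
    proof cases
      case 1 then show False using L_mono[of j m] m(1) cj by simp
    next
      case 2 then show False using L_mono[of m j] a(2) cj by simp
    qed
  qed
  then show ?thesis using m by simp
qed

lemma fix_si: "\<sigma> \<in> Aut \<Longrightarrow> i<k \<Longrightarrow> \<sigma> (si i) = si i"
proof (cases "i = 0")
  case True then show "\<sigma> \<in> Aut \<Longrightarrow> i<k \<Longrightarrow> \<sigma> (si i) = si i" using s0 aut_s by simp
next
  case False
  assume "\<sigma> \<in> Aut" "i<k"
  then show ?thesis using fix_junc[of \<sigma> "i-1"] junc[of "i-1"] False by simp
qed

lemma fix_ti: "\<sigma> \<in> Aut \<Longrightarrow> i<k \<Longrightarrow> \<sigma> (ti i) = ti i"
proof (cases "i = k-1")
  case True then show "\<sigma> \<in> Aut \<Longrightarrow> i<k \<Longrightarrow> \<sigma> (ti i) = ti i" using tk aut_t by simp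
next
  case False
  assume "\<sigma> \<in> Aut" "i<k"
  then show ?thesis using fix_junc[of \<sigma> i] False by simp
qed

lemma Vi_pres: assumes a: "\<sigma> \<in> Aut" "i<k" "x \<in> Vi i" shows "\<sigma> x \<in> Vi i"
proof (cases "x = si i \<or> x = ti i")
  case True then show ?thesis using fix_si[OF a(1,2)] fix_ti[OF a(1,2)] csin[OF a(2)] ctin[OF a(2)] by auto
next
  case False
  have xV: "x \<in> V" using inV a by blast
  have tau: "inv_into V \<sigma> \<in> Aut" using inv_aut[OF a(1)] .
  have s1: "\<sigma> x \<in> L i"
  proof (cases "i+1<k")
    case True
    have "x \<in> A (ti i)" using A_eq[OF True] in_L[of i i x] a False by auto
    then have "\<sigma> x \<in> A (ti i)" using A_pres[OF a(1) ctV[OF a(2)], of x] fix_ti[OF a(1,2)] by auto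
    then show ?thesis using A_eq[OF True] by auto
  next
    case False then have "i = k-1" using a by auto
    then show ?thesis using L_last aut_V[OF a(1) xV] by simp
  qed
  show ?thesis
  proof (rule ccontr)
    assume nx: "\<sigma> x \<notin> Vi i"
    then obtain b where b: "b<i" "\<sigma> x \<in> Vi b" using s1 unfolding L_def by (auto simp: le_less)
    then have i0: "i > 0" by auto
    have j: "(i-1)+1 < k" using a i0 by auto
    have v: "ti (i-1) = si i" using junc[OF j] i0 by simp
    have sxL: "\<sigma> x \<in> L (i-1)" using in_L[of b "i-1"] b by auto
    have "\<sigma> x \<noteq> si i" using fix_si[OF a(1,2)] aut_inj[OF a(1)] xV csV[OF a(2)] False
      by (metis inj_on_eq_iff)
    then have "\<sigma> x \<in> A (ti (i-1))" using A_eq[OF j] sxL v by auto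
    then have "inv_into V \<sigma> (\<sigma> x) \<in> A (inv_into V \<sigma> (ti (i-1)))"
      using A_pres[OF tau ctV] j by auto
    moreover have "inv_into V \<sigma> (ti (i-1)) = ti (i-1)"
      using inv_f[OF a(1) ctV[of "i-1"]] fix_junc[OF a(1) j] j by auto
    ultimately have "x \<in> A (ti (i-1))" using inv_f[OF a(1) xV] by simp
    then have "x \<in> L (i-1)" using A_eq[OF j] by auto
    then obtain c where c: "c \<le> i-1" "x \<in> Vi c" unfolding L_def by auto
    show False
    proof (cases "c+2 \<le> i")
      case True then show ?thesis using disj[of c i] c a by auto
    next
      case False2: False
      then have "c = i-1" using c i0 by auto
      then have "x = si (i-1+1)" using sing_inter[OF adjV[OF j]] c a i0 by auto
      then show ?thesis using False i0 by simp
    qed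
  qed
qed

end



context ser begin

lemma ei_ne: "i<k \<Longrightarrow> {u,v} \<in> Ei i \<Longrightarrow> u \<noteq> v"
proof -
  assume a: "i<k" "{u,v} \<in> Ei i"
  obtain a b where "{u,v} = {a,b}" "a \<noteq> b" using cedge[OF a] by blast
  then show ?thesis by (auto simp: doubleton_eq_iff)
qed

lemma aut_comp: assumes a: "\<sigma> \<in> Aut" "i<k" shows "\<sigma> \<in> aut_or (Vi i) (Ei i) (si i) (ti i)"
proof -
  have sub: "Vi i \<subseteq> V" using inV[OF a(2)] by blast
  have inj: "inj_on \<sigma> (Vi i)" using aut_inj[OF a(1)] sub inj_on_subset by blast
  have img: "\<sigma> ` Vi i \<subseteq> Vi i" using Vi_pres[OF a] by blast
  have "\<sigma> ` Vi i = Vi i" using endo_inj_surj[OF cfin[OF a(2)] img inj] .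
  then have bij: "bij_betw \<sigma> (Vi i) (Vi i)" using inj unfolding bij_betw_def by blast
  have ed: "{u,v} \<in> Ei i \<longleftrightarrow> {\<sigma> u, \<sigma> v} \<in> Ei i" if uv: "u \<in> Vi i" "v \<in> Vi i" for u v
  proof
    assume e: "{u,v} \<in> Ei i"
    have ne: "u \<noteq> v" using ei_ne[OF a(2) e] .
    have "{u,v} \<in> E" using Ei_sub[OF a(2)] e by blast
    then have "{\<sigma> u, \<sigma> v} \<in> E" using aut_edge[OF a(1) sub[THEN subsetD, OF uv(1)] sub[THEN subsetD, OF uv(2)]] by blast
    moreover have "\<sigma> u \<noteq> \<sigma> v" using ne inj_on_eq_iff[OF inj uv] by simp
    moreover have "\<sigma> u \<in> Vi i" "\<sigma> v \<in> Vi i" using Vi_pres[OF a] uv by auto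
    ultimately show "{\<sigma> u, \<sigma> v} \<in> Ei i" using edge_in_comp[OF a(2)] by blast
  next
    assume e: "{\<sigma> u, \<sigma> v} \<in> Ei i"
    have ne: "u \<noteq> v" using ei_ne[OF a(2) e] by auto
    have "{\<sigma> u, \<sigma> v} \<in> E" using Ei_sub[OF a(2)] e by blast
    then have "{u, v} \<in> E" using aut_edge[OF a(1) sub[THEN subsetD, OF uv(1)] sub[THEN subsetD, OF uv(2)]] by blast
    then show "{u, v} \<in> Ei i" using edge_in_comp[OF a(2) uv ne] by blast
  qed
  have "\<forall>u\<in>Vi i. \<forall>v\<in>Vi i. {u,v} \<in> Ei i \<longleftrightarrow> {\<sigma> u, \<sigma> v} \<in> Ei i"
    using ed by blast
  then show ?thesis unfolding aut_or_def mem_Collect_eq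
    using bij fix_si[OF a] fix_ti[OF a] by (intro conjI)
qed

lemma aut_Ei: assumes a: "\<sigma> \<in> Aut" "i<k" "e \<in> Ei i" shows "\<sigma> ` e \<in> Ei i"
proof -
  obtain u v where uv: "e = {u,v}" "u \<in> Vi i" "v \<in> Vi i" using cedge[OF a(2,3)] by blast
  have "\<forall>u\<in>Vi i. \<forall>v\<in>Vi i. {u, v} \<in> Ei i \<longleftrightarrow> {\<sigma> u, \<sigma> v} \<in> Ei i"
    using aut_comp[OF a(1,2)] unfolding aut_or_def mem_Collect_eq by (elim conjE)
  then have "{u, v} \<in> Ei i \<longleftrightarrow> {\<sigma> u, \<sigma> v} \<in> Ei i" using uv(2,3) by (elim ballE) auto
  moreover have "{u, v} \<in> Ei i" using uv(1) a(3) by simp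
  ultimately have "{\<sigma> u, \<sigma> v} \<in> Ei i" by simp
  then show ?thesis using uv(1) by simp
qed

lemma Ei_fin: "i<k \<Longrightarrow> finite (Ei i)"
proof -
  assume i: "i<k"
  have "Ei i \<subseteq> Pow (Vi i)"
  proof
    fix e assume "e \<in> Ei i"
    then obtain u v where "e = {u,v}" "u \<in> Vi i" "v \<in> Vi i" using cedge[OF i] by blast
    then show "e \<in> Pow (Vi i)" by simp
  qed
  then show ?thesis using cfin[OF i] finite_subset by blast
qed

lemma E_fin: "finite E"
proof -
  have "E \<subseteq> Pow V"
  proof
    fix e assume e: "e \<in> E"
    obtain m where "m<k" "e \<in> Ei m" using EE e by auto
    then obtain u v where "e = {u,v}" "u \<in> Vi m" "v \<in> Vi m" using cedge by blast
    then show "e \<in> Pow V" using inV \<open>m<k\<close> by simp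
  qed
  then show ?thesis using finV finite_subset by blast
qed

lemma L_Suc: "L (Suc j) = L j \<union> Vi (Suc j)" unfolding L_def by (auto simp: atMost_Suc)

lemma L_int: assumes "Suc j < k" shows "L j \<inter> Vi (Suc j) = {si (Suc j)}"
proof
  show "{si (Suc j)} \<subseteq> L j \<inter> Vi (Suc j)"
    using junc[of j] assms ctin[of j] csin[of "Suc j"] in_L[of j j] by auto
  show "L j \<inter> Vi (Suc j) \<subseteq> {si (Suc j)}"
  proof
    fix y assume y: "y \<in> L j \<inter> Vi (Suc j)"
    then obtain a where a: "a \<le> j" "y \<in> Vi a" unfolding L_def by auto
    show "y \<in> {si (Suc j)}"
    proof (cases "a = j")
      case True then show ?thesis using sing_inter[OF adjV[of j]] assms y a by auto
    next
      case False then show ?thesis using disj[of a "Suc j"] assms y a by auto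
    qed
  qed
qed

lemma card_L: "j<k \<Longrightarrow> card (L j) + j = (\<Sum>m\<le>j. card (Vi m))"
proof (induction j)
  case 0 then show ?case unfolding L_def by simp
next
  case (Suc j)
  have f1: "finite (L j)" using L_fin Suc by auto
  have f2: "finite (Vi (Suc j))" using cfin Suc by auto
  have "card (L j) + card (Vi (Suc j)) = card (L (Suc j)) + card (L j \<inter> Vi (Suc j))"
    unfolding L_Suc using card_Un_Int[OF f1 f2] .
  then have "card (L j) + card (Vi (Suc j)) = card (L (Suc j)) + 1" using L_int[OF Suc.prems] by simp
  moreover have "card (L j) + j = (\<Sum>m\<le>j. card (Vi m))" using Suc by auto
  ultimately show ?case by simp
qed

lemma card_V_sum: "card V + (k - 1) = (\<Sum>m<k. card (Vi m))"
proof -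
  have "card (L (k-1)) + (k-1) = (\<Sum>m\<le>k-1. card (Vi m))" using card_L[of "k-1"] k2 by auto
  moreover have "{..k-1} = {..<k}" using k2 by auto
  ultimately show ?thesis using L_last by simp
qed

lemma sum_ge: "2 * k \<le> (\<Sum>m<k. card (Vi m))"
proof -
  have "2 \<le> card (Vi m)" if "m<k" for m
  proof -
    have "{si m, ti m} \<subseteq> Vi m" using csin ctin that by auto
    then have "card {si m, ti m} \<le> card (Vi m)" using card_mono cfin that by blast
    then show ?thesis using cst[OF that] by simp
  qed
  then have "(\<Sum>m<k. 2) \<le> (\<Sum>m<k. card (Vi m))" by (intro sum_mono) auto
  then show ?thesis by simp
qed

lemma ST_union:
  assumes T: "\<And>j. j<k \<Longrightarrow> T j \<in> spanning_trees (Vi j) (Ei j)"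
  shows "(\<Union>j<k. T j) \<in> spanning_trees V E"
proof -
  let ?U = "\<Union>j<k. T j"
  have Tsub: "T j \<subseteq> Ei j" if "j<k" for j using T[OF that] unfolding spanning_trees_def by blast
  have Tcon: "connected_graph (Vi j) (T j)" if "j<k" for j using T[OF that] unfolding spanning_trees_def by blast
  have Tcard: "card (T j) + 1 = card (Vi j)" if "j<k" for j using T[OF that] unfolding spanning_trees_def by blast
  have Tfin: "finite (T j)" if "j<k" for j using Tsub[OF that] Ei_fin[OF that] finite_subset by blast
  have Usub: "?U \<subseteq> E"
  proof
    fix e assume "e \<in> ?U"
    then obtain j where "j<k" "e \<in> T j" by blast
    then show "e \<in> E" using Tsub[of j] Ei_sub[of j] by blast
  qed
  have TU: "T j \<subseteq> ?U" if "j<k" for j using that by blast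
  have loc: "rch ?U (si j) x" if "j<k" "x \<in> Vi j" for j x
  proof -
    have "\<forall>u\<in>Vi j. \<forall>v\<in>Vi j. rch (T j) u v" using Tcon[OF that(1)] unfolding connected_graph_def .
    then have "rch (T j) (si j) x" using csin[OF that(1)] that(2) by blast
    then show ?thesis using TU[OF that(1)] by (rule rch_mono)
  qed
  have r: "rch ?U s x" if xV: "x \<in> V" for x
  proof -
    obtain i where i: "i<k" "x \<in> Vi i" using xV VV by auto
    have "rch ?U s (si i)"
    proof (cases "i = 0")
      case True then show ?thesis using s0 by simp
    next
      case False
      have "rch ?U (si 0) (ti (i-1))"
      proof (rule chain)
        fix m assume "0 \<le> m" "m \<le> i-1"
        then have "m<k" using i by linarith
        then show "rch ?U (si m) (ti m)" using loc[of m "ti m"] ctin[of m] by blast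
      qed (use i in linarith)+
      moreover have "ti (i-1) = si i" using junc[of "i-1"] i False by auto
      ultimately show ?thesis using s0 by simp
    qed
    then show ?thesis using loc[OF i] by (rule rtranclp_trans)
  qed
  have con: "connected_graph V ?U" unfolding connected_graph_def
  proof (intro ballI)
    fix u v assume "u \<in> V" "v \<in> V"
    then have "rch ?U s u" "rch ?U s v" using r by auto
    then show "rch ?U u v" using rch_sym[of ?U s u] rtranclp_trans[of _ u s v] by blast
  qed
  have "card ?U = (\<Sum>j<k. card (T j))"
  proof (rule card_UN_disjoint)
    show "finite {..<k}" by simp
    show "\<forall>j\<in>{..<k}. finite (T j)" using Tfin by auto
    show "\<forall>i\<in>{..<k}. \<forall>j\<in>{..<k}. i \<noteq> j \<longrightarrow> T i \<inter> T j = {}"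
    proof (intro ballI impI)
      fix i j assume "i \<in> {..<k}" "j \<in> {..<k}" "i \<noteq> j"
      then have "Ei i \<inter> Ei j = {}" using E_disj by auto
      then show "T i \<inter> T j = {}" using Tsub \<open>i \<in> {..<k}\<close> \<open>j \<in> {..<k}\<close> by blast
    qed
  qed
  moreover have "(\<Sum>j<k. card (T j) + 1) = (\<Sum>j<k. card (Vi j))" using Tcard by (intro sum.cong) auto
  moreover have "(\<Sum>j<k. card (T j) + 1) = (\<Sum>j<k. card (T j)) + k" by (subst sum.distrib) simp
  ultimately have "card ?U + k = card V + (k - 1)" using card_V_sum by linarith
  then have "card ?U + 1 = card V" using k2 by linarith
  then show ?thesis using Usub con unfolding spanning_trees_def by blast
qed

end



context ser begin

lemma st_fin: "finite (spanning_trees V E)"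
proof -
  have "spanning_trees V E \<subseteq> Pow E" unfolding spanning_trees_def by blast
  then show ?thesis using E_fin finite_subset by blast
qed

lemma orb_le:
  assumes i: "i<k"
  shows "num_st_orbits (Vi i) (Ei i) (si i) (ti i) \<le> num_st_orbits V E s t"
proof -
  define STi where "STi = spanning_trees (Vi i) (Ei i)"
  define AutI where "AutI = aut_or (Vi i) (Ei i) (si i) (ti i)"
  define orbG where "orbG X = {tree_image \<sigma> X | \<sigma>. \<sigma> \<in> Aut}" for X
  define orbI where "orbI X = {tree_image \<sigma> X | \<sigma>. \<sigma> \<in> AutI}" for X
  define R where "R j = (SOME T. T \<in> spanning_trees (Vi j) (Ei j))" for j
  have R_in: "R j \<in> spanning_trees (Vi j) (Ei j)" if "j<k" for j
  proof -
    have "spanning_trees (Vi j) (Ei j) \<noteq> {}" using osp_st[OF osps[OF that]] .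
    then show ?thesis unfolding R_def by (metis ex_in_conv someI_ex)
  qed
  have R_sub: "R j \<subseteq> Ei j" if "j<k" for j using R_in[OF that] unfolding spanning_trees_def by blast
  define f where "f T = (\<Union>j<k. if j = i then T else R j)" for T
  have f_in: "f T \<in> spanning_trees V E" if "T \<in> STi" for T
    unfolding f_def by (rule ST_union) (use that R_in in \<open>auto simp: STi_def\<close>)
  have fT: "T \<subseteq> f T" for T
  proof
    fix e assume "e \<in> T"
    then have "e \<in> (if i = i then T else R i)" by simp
    then show "e \<in> f T" unfolding f_def using i by (intro UN_I[of i]) auto
  qed
  have fE: "\<exists>j<k. e \<in> (if j = i then T else R j)" if "e \<in> f T" for e T
    using that unfolding f_def by (simp only: UN_iff Bex_def lessThan_iff)
  have f_cap: "f T \<inter> Ei i = T" if "T \<subseteq> Ei i" for T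
  proof
    show "T \<subseteq> f T \<inter> Ei i" using that fT[of T] by (intro Int_greatest)
    show "f T \<inter> Ei i \<subseteq> T"
    proof
      fix e assume e: "e \<in> f T \<inter> Ei i"
      then obtain j where j: "j<k" "e \<in> (if j = i then T else R j)" using fE by blast
      show "e \<in> T"
      proof (cases "j = i")
        case True then show ?thesis using j by simp
      next
        case False
        then have "e \<in> Ei j" using j R_sub[OF j(1)] by auto
        then have "e \<in> Ei j \<inter> Ei i" using e by blast
        then show ?thesis using E_disj[OF j(1) i False] by blast
      qed
    qed
  qed
  have img_cap: "tree_image \<sigma> (f T) \<inter> Ei i = tree_image \<sigma> T" if s: "\<sigma> \<in> Aut" and T: "T \<subseteq> Ei i" for \<sigma> T
  proof
    show "tree_image \<sigma> T \<subseteq> tree_image \<sigma> (f T) \<inter> Ei i"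
    proof
      fix e assume "e \<in> tree_image \<sigma> T"
      then obtain e' where e': "e' \<in> T" "e = \<sigma> ` e'" unfolding tree_image_def by blast
      have "e' \<in> f T" using e'(1) fT by blast
      moreover have "\<sigma> ` e' \<in> Ei i" using aut_Ei[OF s i] e'(1) T by blast
      ultimately show "e \<in> tree_image \<sigma> (f T) \<inter> Ei i" using e'(2) unfolding tree_image_def by blast
    qed
    show "tree_image \<sigma> (f T) \<inter> Ei i \<subseteq> tree_image \<sigma> T"
    proof
      fix e assume e: "e \<in> tree_image \<sigma> (f T) \<inter> Ei i"
      then obtain e' where e': "e' \<in> f T" "e = \<sigma> ` e'" unfolding tree_image_def by blast
      then obtain j where j: "j<k" "e' \<in> (if j = i then T else R j)" using fE by blast
      show "e \<in> tree_image \<sigma> T"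
      proof (cases "j = i")
        case True then show ?thesis using j e'(2) unfolding tree_image_def by auto
      next
        case False
        then have "e' \<in> Ei j" using j R_sub[OF j(1)] by auto
        then have "e \<in> Ei j" using aut_Ei[OF s j(1)] e'(2) by blast
        then have "e \<in> Ei j \<inter> Ei i" using e by blast
        then show ?thesis using E_disj[OF j(1) i False] by blast
      qed
    qed
  qed
  have STi_sub: "T \<subseteq> Ei i" if "T \<in> STi" for T using that unfolding STi_def spanning_trees_def by blast
  have key: "orbI T1 \<subseteq> orbI T2"
    if T: "T1 \<in> STi" "T2 \<in> STi" and eq: "orbG (f T1) = orbG (f T2)" for T1 T2
  proof -
    have "f T1 \<in> orbG (f T1)" unfolding orbG_def using id_aut[of V E s t] tree_image_id[of "f T1"] by blast
    then have "f T1 \<in> orbG (f T2)" using eq by simp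
    then obtain \<sigma> where s: "\<sigma> \<in> Aut" "f T1 = tree_image \<sigma> (f T2)" unfolding orbG_def by blast
    have "T1 = tree_image \<sigma> T2"
      using f_cap[OF STi_sub[OF T(1)]] img_cap[OF s(1) STi_sub[OF T(2)]] s(2) by simp
    moreover have sI: "\<sigma> \<in> AutI" unfolding AutI_def by (rule aut_comp[OF s(1) i])
    show ?thesis
    proof
      fix X assume "X \<in> orbI T1"
      then obtain \<rho> where r: "\<rho> \<in> AutI" "X = tree_image \<rho> T1" unfolding orbI_def by blast
      have "\<rho> \<circ> \<sigma> \<in> AutI" using aut_compose[OF sI[unfolded AutI_def] r(1)[unfolded AutI_def]] unfolding AutI_def .
      moreover have "X = tree_image (\<rho> \<circ> \<sigma>) T2" using r(2) \<open>T1 = tree_image \<sigma> T2\<close> tree_image_comp by simp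
      ultimately show "X \<in> orbI T2" unfolding orbI_def by blast
    qed
  qed
  define phi where "phi T = orbG (f T)" for T
  have orbits_G: "st_orbits V E s t = orbG ` spanning_trees V E"
    unfolding st_orbits_def orbG_def by simp
  have orbits_I: "st_orbits (Vi i) (Ei i) (si i) (ti i) = orbI ` STi"
    unfolding st_orbits_def orbI_def STi_def AutI_def by simp
  have finG: "finite (st_orbits V E s t)" unfolding orbits_G using st_fin by simp
  have sub1: "phi ` STi \<subseteq> st_orbits V E s t" unfolding orbits_G phi_def using f_in by blast
  have fin1: "finite (phi ` STi)" using finite_subset[OF sub1 finG] .
  define g where "g Ob = orbI (SOME T. T \<in> STi \<and> phi T = Ob)" for Ob
  have sub2: "orbI ` STi \<subseteq> g ` (phi ` STi)"
  proof
    fix X assume "X \<in> orbI ` STi"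
    then obtain T where T: "T \<in> STi" "X = orbI T" by blast
    define T' where "T' = (SOME T'. T' \<in> STi \<and> phi T' = phi T)"
    have "T' \<in> STi \<and> phi T' = phi T" unfolding T'_def by (rule someI[of _ T]) (use T in simp)
    then have "orbI T' = orbI T" using key[of T' T] key[of T T'] T(1) unfolding phi_def by blast
    then have "X = g (phi T)" unfolding g_def T'_def[symmetric] using T(2) by simp
    then show "X \<in> g ` (phi ` STi)" using T(1) by blast
  qed
  have "card (orbI ` STi) \<le> card (g ` (phi ` STi))" using card_mono[OF finite_imageI[OF fin1] sub2] .
  also have "\<dots> \<le> card (phi ` STi)" by (rule card_image_le[OF fin1])
  also have "\<dots> \<le> card (st_orbits V E s t)" by (rule card_mono[OF finG sub1])
  finally show ?thesis unfolding num_st_orbits_def orbits_I .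
qed

lemma main_ineq:
  "(\<Sum>i<k. card (Vi i) * num_st_orbits (Vi i) (Ei i) (si i) (ti i)) \<le> 2 * card V * num_st_orbits V E s t"
proof -
  let ?N = "num_st_orbits V E s t"
  have "(\<Sum>i<k. card (Vi i) * num_st_orbits (Vi i) (Ei i) (si i) (ti i)) \<le> (\<Sum>i<k. card (Vi i) * ?N)"
    by (rule sum_mono) (use orb_le in simp)
  also have "\<dots> = (\<Sum>i<k. card (Vi i)) * ?N" by (simp add: sum_distrib_right)
  also have "\<dots> \<le> (2 * card V) * ?N"
  proof (rule mult_right_mono)
    show "(\<Sum>i<k. card (Vi i)) \<le> 2 * card V" using card_V_sum sum_ge by linarith
  qed simp
  finally show ?thesis by simp
qed

end

lemma serI:
  assumes "serial_superedge_with V E s t comps"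
    and "\<forall>c\<in>set comps. non_serial (cV c) (cE c) (cs c) (ct c)"
  shows "ser V E s t comps"
proof -
  have c: "serial_comb V E s t comps" and l: "list_all (\<lambda>c. osp (cV c) (cE c) (cs c) (ct c)) comps"
    using assms(1) unfolding serial_superedge_with_def by auto
  interpret ser0 V E s t comps using ser0I[OF c l] .
  show ?thesis
  proof
    fix i assume "i < length comps"
    then show "osp (cV (comps ! i)) (cE (comps ! i)) (cs (comps ! i)) (ct (comps ! i))"
      using l by (simp add: list_all_length)
  next
    fix i assume "i < length comps"
    then show "non_serial (cV (comps ! i)) (cE (comps ! i)) (cs (comps ! i)) (ct (comps ! i))"
      using assms(2) nth_mem by blast
  qed
qed

theorem lemma5p13:
  shows "\<exists>C::real. C > 0 \<and>
    (\<forall>V E s t comps.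
       serial_superedge_with V E s t comps \<longrightarrow>
       (\<forall>c\<in>set comps. non_serial (cV c) (cE c) (cs c) (ct c)) \<longrightarrow>
       (\<Sum>i<length comps. real (card (cV (comps ! i))) *
            real (num_st_orbits (cV (comps ! i)) (cE (comps ! i)) (cs (comps ! i)) (ct (comps ! i))))
         \<le> C * real (card V) * real (num_st_orbits V E s t))"
proof (intro exI[of _ 2] conjI allI impI)
  show "(0::real) < 2" by simp
  fix V E s t comps
  assume a: "serial_superedge_with V E s t comps"
    "\<forall>c\<in>set comps. non_serial (cV c) (cE c) (cs c) (ct c)"
  interpret ser V E s t comps using serI[OF a] .
  have "(\<Sum>i<length comps. real (card (cV (comps ! i))) *
            real (num_st_orbits (cV (comps ! i)) (cE (comps ! i)) (cs (comps ! i)) (ct (comps ! i))))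
      = real (\<Sum>i<length comps. card (cV (comps ! i)) *
            num_st_orbits (cV (comps ! i)) (cE (comps ! i)) (cs (comps ! i)) (ct (comps ! i)))"
    by simp
  also have "\<dots> \<le> real (2 * card V * num_st_orbits V E s t)"
    using main_ineq by (simp only: of_nat_le_iff)
  also have "\<dots> = 2 * real (card V) * real (num_st_orbits V E s t)" by simp
  finally show "(\<Sum>i<length comps. real (card (cV (comps ! i))) *
            real (num_st_orbits (cV (comps ! i)) (cE (comps ! i)) (cs (comps ! i)) (ct (comps ! i))))
         \<le> 2 * real (card V) * real (num_st_orbits V E s t)" .
qed


end
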